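(* For every $0<\alpha\le 1$ the space $g^\alpha_\alpha(\mathbb R^d_+)$ is trivial, i.e. $g^\alpha_\alpha(\mathbb R^d_+)=\{0\}$.
   Context: $\mathbb R^d_+=(0,\infty)^d$. Multi-index notation: for $k,p\in\mathbb N_0^d$, $|k|=k_1+\dots+k_d$, $x^{(p+k)/2}=\prod_j x_j^{(p_j+k_j)/2}$, $k^{(\alpha/2)k}=\prod_j k_j^{(\alpha/2)k_j}$ with $0^0=1$, $\partial^p=\partial_{x_1}^{p_1}\cdots\partial_{x_d}^{p_d}$. $\mathcal S(\mathbb R^d_+)$ is the space of $f\in C^\infty(\mathbb R^d_+)$ all of whose derivatives extend continuously to $[0,\infty)^d$ and satisfy $\sup_{x\in\mathbb R^d_+}x^\beta|\partial^\gamma f(x)|<\infty$ for all $\beta,\gamma\in\mathbb N_0^d$. For $\alpha>0$, $A>0$, $g^{\alpha,A}_{\alpha,A}(\mathbb R^d_+)$ is the space of all $f\in\mathcal S(\mathbb R^d_+)$ with $\sup_{p,k\in\mathbb N_0^d}\frac{\|x^{(p+k)/2}\partial^p f(x)\|_{L^2(\mathbb R^d_+)}}{A^{|p+k|}k^{(\alpha/2)k}p^{(\alpha/2)p}}<\infty$, and $g^\alpha_\alpha(\mathbb R^d_+)=\bigcap_{A>0}g^{\alpha,A}_{\alpha,A}(\mathbb R^d_+)$. *)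

theory Defs
  imports "HOL-Analysis.Analysis"
begin

text \<open>Points of R^d are modelled as functions nat => real; only the coordinates
  0..d-1 matter. The open orthant R^d_+ and its closure, as extensional function sets.\<close>

definition Opos :: "nat \<Rightarrow> (nat \<Rightarrow> real) set" where
  "Opos d = PiE {..<d} (\<lambda>_. {0<..})"

definition Cpos :: "nat \<Rightarrow> (nat \<Rightarrow> real) set" where
  "Cpos d = PiE {..<d} (\<lambda>_. {0..})"

definition lebd :: "nat \<Rightarrow> (nat \<Rightarrow> real) measure" where
  "lebd d = PiM {..<d} (\<lambda>_. lborel)"

definition pd :: "nat \<Rightarrow> ((nat \<Rightarrow> real) \<Rightarrow> complex) \<Rightarrow> (nat \<Rightarrow> real) \<Rightarrow> complex" where
  "pd i f x = vector_derivative (\<lambda>t. f (x(i := t))) (at (x i))"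

fun pdl :: "nat list \<Rightarrow> ((nat \<Rightarrow> real) \<Rightarrow> complex) \<Rightarrow> (nat \<Rightarrow> real) \<Rightarrow> complex" where
  "pdl [] f = f"
| "pdl (i # is) f = pd i (pdl is f)"

definition mpd :: "nat \<Rightarrow> (nat \<Rightarrow> nat) \<Rightarrow> ((nat \<Rightarrow> real) \<Rightarrow> complex) \<Rightarrow> (nat \<Rightarrow> real) \<Rightarrow> complex" where
  "mpd d p f = pdl (concat (map (\<lambda>j. replicate (p j) j) [0..<d])) f"

definition schwartz_plus :: "nat \<Rightarrow> ((nat \<Rightarrow> real) \<Rightarrow> complex) \<Rightarrow> bool" where
  "schwartz_plus d f \<longleftrightarrow>
     (\<forall>is. set is \<subseteq> {..<d} \<longrightarrow>
        continuous_on (Opos d) (pdl is f) \<and>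
        (\<forall>x\<in>Opos d. \<forall>i<d. (\<lambda>t. pdl is f (x(i := t))) differentiable (at (x i))) \<and>
        (\<exists>g. continuous_on (Cpos d) g \<and> (\<forall>x\<in>Opos d. g x = pdl is f x))) \<and>
     (\<forall>\<beta> \<gamma> :: nat \<Rightarrow> nat. \<exists>C. \<forall>x\<in>Opos d.
        (\<Prod>j<d. x j ^ \<beta> j) * cmod (mpd d \<gamma> f x) \<le> C)"

text \<open>|k| and k^{(\<alpha>/2)k} with the convention 0^0 = 1.\<close>
definition mlen :: "nat \<Rightarrow> (nat \<Rightarrow> nat) \<Rightarrow> nat" where
  "mlen d k = (\<Sum>j<d. k j)"

definition mpow :: "nat \<Rightarrow> real \<Rightarrow> (nat \<Rightarrow> nat) \<Rightarrow> real" where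
  "mpow d \<alpha> k = (\<Prod>j<d. if k j = 0 then 1 else real (k j) powr ((\<alpha> / 2) * real (k j)))"

definition wL2sq :: "nat \<Rightarrow> (nat \<Rightarrow> nat) \<Rightarrow> (nat \<Rightarrow> nat) \<Rightarrow> ((nat \<Rightarrow> real) \<Rightarrow> complex) \<Rightarrow> ennreal" where
  "wL2sq d p k f = (\<integral>\<^sup>+ x. indicator (Opos d) x *
      ennreal (((\<Prod>j<d. x j powr ((real (p j) + real (k j)) / 2)) * cmod (mpd d p f x))\<^sup>2) \<partial>lebd d)"

definition GS_A :: "nat \<Rightarrow> real \<Rightarrow> real \<Rightarrow> ((nat \<Rightarrow> real) \<Rightarrow> complex) set" where
  "GS_A d \<alpha> A = {f. schwartz_plus d f \<and>
     (\<exists>C::real. \<forall>p k. wL2sq d p k f \<le>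
        ennreal ((C * A ^ (mlen d p + mlen d k) * mpow d \<alpha> k * mpow d \<alpha> p)\<^sup>2))}"

definition GS :: "nat \<Rightarrow> real \<Rightarrow> ((nat \<Rightarrow> real) \<Rightarrow> complex) set" where
  "GS d \<alpha> = (\<Inter>A\<in>{0<..}. GS_A d \<alpha> A)"

end

theory Submission
  imports Defs "HOL-Analysis.Analysis"
begin



lemma deriv_h0:
  fixes u v :: "real \<Rightarrow> real" and m :: nat
  assumes r: "(u has_real_derivative du) (at t within S)"
    and i: "(v has_real_derivative dv) (at t within S)"
  shows "((\<lambda>t. t^(m+1)  *  ((u t)\<^sup>2 + (v t)\<^sup>2) / (m+1)) has_real_derivative
     (t^m  *  ((u t)\<^sup>2 + (v t)\<^sup>2) + t^(m+1)  *  (2 * u t * du + 2 * v t * dv) / (m+1))) (at t within S)"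
proof -
  show ?thesis
    apply (rule derivative_eq_intros r i refl | simp)+
    apply (simp add: field_simps power2_eq_square)
    done
qed

lemma deriv_h:
  fixes \<phi> \<phi>' :: "real \<Rightarrow> complex" and m :: nat
  assumes "(\<phi> has_vector_derivative \<phi>' t) (at t within S)"
  shows "((\<lambda>t. t^(m+1)  *  ((Re (\<phi> t))\<^sup>2 + (Im (\<phi> t))\<^sup>2) / (m+1)) has_real_derivative
     (t^m  *  ((Re (\<phi> t))\<^sup>2 + (Im (\<phi> t))\<^sup>2) + t^(m+1)  *  (2 * Re (\<phi> t) * Re (\<phi>' t) + 2 * Im (\<phi> t) * Im (\<phi>' t)) / (m+1))) (at t within S)"
proof -
  have r: "((\<lambda>t. Re (\<phi> t)) has_real_derivative Re (\<phi>' t)) (at t within S)"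
    using bounded_linear.has_vector_derivative[OF bounded_linear_Re assms]
    by (simp add: has_real_derivative_iff_has_vector_derivative)
  have i: "((\<lambda>t. Im (\<phi> t)) has_real_derivative Im (\<phi>' t)) (at t within S)"
    using bounded_linear.has_vector_derivative[OF bounded_linear_Im assms]
    by (simp add: has_real_derivative_iff_has_vector_derivative)
  show ?thesis using deriv_h0[OF r i, of m] by simp
qed



lemma alg: "(a::real) + c * x / k + (c * y + c * z) / k - a = c * (x + y + z) / k"
  by (simp add: add_divide_distrib[symmetric] distrib_left)
lemma alg2: "2 * (u::real) * du + 2 * v * dv + (du\<^sup>2 + dv\<^sup>2) + (u\<^sup>2 + v\<^sup>2) = (u + du)\<^sup>2 + (v + dv)\<^sup>2"
  by (simp add: power2_eq_square algebra_simps)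

lemma ind_ennreal: "(indicator A x :: ennreal) * ennreal y = ennreal (indicator A x * y)"
  by (cases "x \<in> A") auto

lemma ibp1d:
  fixes \<phi> \<phi>' :: "real \<Rightarrow> complex" and m :: nat and C0 C1 :: real
  assumes der: "\<And>t. 0 < t \<Longrightarrow> (\<phi> has_vector_derivative \<phi>' t) (at t)"
    and cont': "continuous_on {0<..} \<phi>'"
    and b0: "\<And>t. 0 < t \<Longrightarrow> cmod (\<phi> t) \<le> C0"
    and b1: "\<And>t. 0 < t \<Longrightarrow> t ^ (m+2) * cmod (\<phi> t) \<le> C1"
  shows "(\<integral>\<^sup>+t. indicator {0<..} t * ennreal (t ^ m * (cmod (\<phi> t))\<^sup>2) \<partial>lborel)
     \<le> (\<integral>\<^sup>+t. indicator {0<..} t * ennreal ((t ^ (m+1) * (cmod (\<phi>' t))\<^sup>2 + t ^ (m+1) * (cmod (\<phi> t))\<^sup>2) / (m+1)) \<partial>lborel)"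
proof -
  define \<psi> where "\<psi> t = t ^ m * (cmod (\<phi> t))\<^sup>2" for t
  define R where "R t = (t ^ (m+1) * (cmod (\<phi>' t))\<^sup>2 + t ^ (m+1) * (cmod (\<phi> t))\<^sup>2) / (m+1)" for t
  define h where "h t = t ^ (m+1) * ((Re (\<phi> t))\<^sup>2 + (Im (\<phi> t))\<^sup>2) / (m+1)" for t
  define h' where "h' t = t ^ m * ((Re (\<phi> t))\<^sup>2 + (Im (\<phi> t))\<^sup>2) + t ^ (m+1) * (2 * Re (\<phi> t) * Re (\<phi>' t) + 2 * Im (\<phi> t) * Im (\<phi>' t)) / (m+1)" for t
  have cmod2: "\<And>z. (cmod z)\<^sup>2 = (Re z)\<^sup>2 + (Im z)\<^sup>2" by (simp add: cmod_power2)
  have C0: "0 \<le> C0" using b0[of 1] by (meson norm_ge_zero order_trans zero_less_one)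
  have C1: "0 \<le> C1"
  proof -
    have "cmod (\<phi> 1) \<le> C1" using b1[of 1] by simp
    then show ?thesis by (meson norm_ge_zero order_trans)
  qed
  have contphi: "continuous_on {0<..} \<phi>"
    by (rule continuous_at_imp_continuous_on) (auto intro: has_vector_derivative_continuous der)
  have contpsi: "continuous_on {0<..} \<psi>" unfolding \<psi>_def
    by (intro continuous_intros contphi)
  have contR: "continuous_on {0<..} R" unfolding R_def
    by (intro continuous_intros contphi cont') simp
  have hder: "(h has_real_derivative h' t) (at t within S)" if "0 < t" for t S
    unfolding h_def h'_def
    by (rule deriv_h, rule has_vector_derivative_at_within, rule der[OF that])
  have pw: "\<psi> t \<le> h' t + R t" if "0 < t" for t
  proof -
    have "h' t + R t - \<psi> t = t ^ (m+1) * ((Re (\<phi> t) + Re (\<phi>' t))\<^sup>2 + (Im (\<phi> t) + Im (\<phi>' t))\<^sup>2) / (m+1)"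
    proof -
      have "h' t + R t - \<psi> t = t ^ (m+1) * ((2 * Re (\<phi> t) * Re (\<phi>' t) + 2 * Im (\<phi> t) * Im (\<phi>' t)) + ((Re (\<phi>' t))\<^sup>2 + (Im (\<phi>' t))\<^sup>2) + ((Re (\<phi> t))\<^sup>2 + (Im (\<phi> t))\<^sup>2)) / (m+1)"
        unfolding h'_def R_def \<psi>_def cmod2 by (rule alg)
      then show ?thesis by (simp only: alg2)
    qed
    also have "\<dots> \<ge> 0" using that by simp
    finally show ?thesis by simp
  qed
  have hnn: "0 \<le> h t" if "0 < t" for t unfolding h_def using that by simp
  have hbound: "h t \<le> C0 * C1 / t" if "1 \<le> t" for t
  proof -
    have t0: "0 < t" using that by simp
    have "h t = t ^ (m+1) * (cmod (\<phi> t))\<^sup>2 / (m+1)" unfolding h_def cmod2 ..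
    also have "\<dots> \<le> t ^ (m+1) * (cmod (\<phi> t))\<^sup>2"
      using t0 by (simp add: divide_le_eq field_simps)
    also have "\<dots> = (t ^ (m+2) * cmod (\<phi> t)) * cmod (\<phi> t) / t"
      using t0 by (simp add: field_simps power2_eq_square)
    also have "\<dots> \<le> C1 * C0 / t"
      using t0 b0[OF t0] b1[OF t0] C1
      by (intro divide_right_mono mult_mono) auto
    finally show ?thesis by (simp add: mult.commute)
  qed
  have fin: "(\<integral>\<^sup>+t. indicator {a..b} t * ennreal (\<psi> t) \<partial>lborel) \<le> ennreal (h b) + (\<integral>\<^sup>+t. indicator {0<..} t * ennreal (R t) \<partial>lborel)"
    if ab: "0 < a" "a \<le> b" for a b
  proof -
    have sub: "{a..b} \<subseteq> {0<..}" using ab by auto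
    have I1: "(h' has_integral h b - h a) {a..b}"
      using ab by (intro fundamental_theorem_of_calculus)
        (auto simp: has_real_derivative_iff_has_vector_derivative[symmetric] intro!: hder)
    have ipsi: "\<psi> integrable_on {a..b}"
      by (rule integrable_continuous_interval, rule continuous_on_subset[OF contpsi sub])
    have iR: "R integrable_on {a..b}"
      by (rule integrable_continuous_interval, rule continuous_on_subset[OF contR sub])
    have "integral {a..b} \<psi> \<le> integral {a..b} (\<lambda>t. h' t + R t)"
      using sub pw by (intro integral_le ipsi integrable_add iR) (auto intro: has_integral_integrable[OF I1])
    also have "\<dots> = (h b - h a) + integral {a..b} R"
      using I1 iR by (simp add: integral_add has_integral_integrable integral_unique)
    also have "\<dots> \<le> h b + integral {a..b} R" using hnn ab by simp
    finally have le: "integral {a..b} \<psi> \<le> h b + integral {a..b} R" .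
    have Rnn: "0 \<le> R t" if "0 < t" for t unfolding R_def using that by simp
    have psinn: "0 \<le> \<psi> t" if "0 < t" for t unfolding \<psi>_def using that by simp
    have e1: "(\<integral>\<^sup>+t. indicator {a..b} t * ennreal (\<psi> t) \<partial>lborel) = ennreal (integral {a..b} \<psi>)"
      unfolding ind_ennreal
      by (rule nn_integral_has_integral_lebesgue) (use psinn sub ipsi in auto)
    have e2: "(\<integral>\<^sup>+t. indicator {a..b} t * ennreal (R t) \<partial>lborel) = ennreal (integral {a..b} R)"
      unfolding ind_ennreal
      by (rule nn_integral_has_integral_lebesgue) (use Rnn sub iR in auto)
    have iRnn: "0 \<le> integral {a..b} R" using Rnn sub by (intro integral_nonneg iR) auto
    have "(\<integral>\<^sup>+t. indicator {a..b} t * ennreal (\<psi> t) \<partial>lborel) \<le> ennreal (h b + integral {a..b} R)"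
      unfolding e1 using le by (rule ennreal_leI)
    also have "\<dots> = ennreal (h b) + ennreal (integral {a..b} R)"
      using hnn[of b] ab iRnn by (intro ennreal_plus) auto
    also have "ennreal (integral {a..b} R) \<le> (\<integral>\<^sup>+t. indicator {0<..} t * ennreal (R t) \<partial>lborel)"
      unfolding e2[symmetric] using sub
      by (intro nn_integral_mono) (auto simp: indicator_def)
    finally show ?thesis by (simp add: add_left_mono)
  qed
  have subn: "{1 / Suc n..real (Suc n)} \<subseteq> {0<..}" for n
  proof
    fix x assume x: "x \<in> {1 / Suc n..real (Suc n)}"
    have pos: "0 < 1 / real (Suc n)" by simp
    from x have "1 / real (Suc n) \<le> x" by (simp only: atLeastAtMost_iff)
    with pos have "0 < x" by linarith
    then show "x \<in> {0<..}" by simp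
  qed
  define F where "F n t = indicator {1 / Suc n..Suc n} t * ennreal (\<psi> t)" for n t
  have Fmeas: "F n \<in> borel_measurable lborel" for n
  proof -
    have sub: "{1 / Suc n..real (Suc n)} \<subseteq> {0<..}" by (rule subn)
    have "(\<lambda>x. indicator {1 / Suc n..real (Suc n)} x *\<^sub>R \<psi> x) \<in> borel_measurable borel"
      by (intro borel_measurable_continuous_on_indicator continuous_on_subset[OF contpsi sub]) auto
    then have "(\<lambda>x. ennreal (indicator {1 / Suc n..real (Suc n)} x *\<^sub>R \<psi> x)) \<in> borel_measurable borel"
      by measurable
    then show ?thesis unfolding F_def ind_ennreal by simp
  qed
  have Finc: "incseq F"
  proof (rule incseq_SucI, rule le_funI)
    fix n t
    have "{1 / Suc n..real (Suc n)} \<subseteq> {1 / Suc (Suc n)..real (Suc (Suc n))}"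
      by (auto simp: frac_le intro: order_trans[rotated])
    then show "F n t \<le> F (Suc n) t" unfolding F_def
      by (intro mult_right_mono) (auto simp: indicator_def)
  qed
  have Fsup: "(SUP n. F n t) = indicator {0<..} t * ennreal (\<psi> t)" for t
  proof (rule antisym)
    show "(SUP n. F n t) \<le> indicator {0<..} t * ennreal (\<psi> t)"
    proof (rule SUP_least)
      fix n
      have "(indicator {1 / Suc n..real (Suc n)} t :: ennreal) \<le> indicator {0<..} t"
        using subn[of n] by (auto simp: indicator_def subset_eq)
      then show "F n t \<le> indicator {0<..} t * ennreal (\<psi> t)" unfolding F_def
        by (intro mult_right_mono) auto
    qed
  next
    show "indicator {0<..} t * ennreal (\<psi> t) \<le> (SUP n. F n t)"
    proof (cases "0 < t")
      case True
      obtain n1 :: nat where n1: "1 / t < n1" using reals_Archimedean2 by blast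
      obtain n2 :: nat where n2: "t < n2" using reals_Archimedean2 by blast
      define n where "n = max n1 n2"
      have nn: "real n1 \<le> real n" "real n2 \<le> real n" unfolding n_def by auto
      have "1 / Suc n \<le> t"
      proof -
        have "1 / t < real (Suc n)" using n1 nn by simp
        then have "1 < real (Suc n) * t" using True by (simp add: divide_less_eq)
        then show ?thesis using True by (simp add: divide_le_eq mult.commute)
      qed
      moreover have "t \<le> Suc n" using n2 nn by simp
      ultimately have "F n t = indicator {0<..} t * ennreal (\<psi> t)"
        unfolding F_def using True by (simp add: indicator_def)
      then show ?thesis by (metis SUP_upper UNIV_I)
    qed simp
  qed
  have "(\<integral>\<^sup>+t. indicator {0<..} t * ennreal (\<psi> t) \<partial>lborel) = (\<integral>\<^sup>+t. (SUP n. F n t) \<partial>lborel)"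
    by (simp add: Fsup)
  also have "\<dots> = (SUP n. integral\<^sup>N lborel (F n))"
    by (rule nn_integral_monotone_convergence_SUP[OF Finc Fmeas])
  also have "\<dots> \<le> (\<integral>\<^sup>+t. indicator {0<..} t * ennreal (R t) \<partial>lborel)"
  proof (rule SUP_least)
    fix n
    show "integral\<^sup>N lborel (F n) \<le> (\<integral>\<^sup>+t. indicator {0<..} t * ennreal (R t) \<partial>lborel)"
    proof (rule ennreal_le_epsilon)
      fix e :: real assume e: "0 < e"
      define T where "T = max (real (Suc n)) (C0 * C1 / e + 1)"
      have T1: "1 \<le> T" "real (Suc n) \<le> T" "C0 * C1 / e \<le> T" unfolding T_def by auto
      have hT: "h T \<le> e"
      proof -
        have "h T \<le> C0 * C1 / T" using hbound T1 by simp
        also have "\<dots> \<le> e"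
        proof -
          have T0: "0 < T" using T1 by linarith
          have "C0 * C1 \<le> T * e" using T1(3) e by (simp add: pos_divide_le_eq)
          then show ?thesis using T0 by (simp add: pos_divide_le_eq mult.commute)
        qed
        finally show ?thesis .
      qed
      have "integral\<^sup>N lborel (F n) \<le> (\<integral>\<^sup>+t. indicator {1 / Suc n..T} t * ennreal (\<psi> t) \<partial>lborel)"
        unfolding F_def using T1 by (intro nn_integral_mono mult_right_mono) (auto simp: indicator_def)
      also have "\<dots> \<le> ennreal (h T) + (\<integral>\<^sup>+t. indicator {0<..} t * ennreal (R t) \<partial>lborel)"
      proof -
        have a1: "0 < 1 / real (Suc n)" by simp
        have "1 / real (Suc n) \<le> 1" by simp
        then have a2: "1 / real (Suc n) \<le> T" using T1(1) by linarith
        show ?thesis by (rule fin[OF a1 a2])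
      qed
      also have "\<dots> \<le> (\<integral>\<^sup>+t. indicator {0<..} t * ennreal (R t) \<partial>lborel) + ennreal e"
        using hT by (simp add: add.commute add_right_mono ennreal_leI)
      finally show "integral\<^sup>N lborel (F n) \<le> (\<integral>\<^sup>+t. indicator {0<..} t * ennreal (R t) \<partial>lborel) + ennreal e" .
    qed
  qed
  finally show ?thesis unfolding \<psi>_def R_def .
qed




definition pe :: "nat \<Rightarrow> nat \<Rightarrow> nat" where "pe a = (\<lambda>j. if j = 0 then a else 0)"

lemma concat_nil: "(\<forall>j\<in>set xs. g j = []) \<Longrightarrow> concat (map g xs) = []"
  by (induction xs) auto

lemma mpd_pe: assumes "1 \<le> d" shows "mpd d (pe a) f = pdl (replicate a 0) f"
proof -
  define g where "g = (\<lambda>j. replicate (pe a j) j)"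
  have "[0..<d] = 0 # [1..<d]" using assms by (simp add: upt_conv_Cons)
  then have "concat (map g [0..<d]) = g 0 @ concat (map g [1..<d])" by simp
  moreover have "concat (map g [1..<d]) = []"
    by (rule concat_nil) (auto simp: pe_def g_def)
  ultimately have "concat (map g [0..<d]) = replicate a 0" by (simp add: g_def pe_def)
  then show ?thesis unfolding mpd_def g_def by simp
qed

lemma pdl_zero: "pdl is (\<lambda>_. 0) = (\<lambda>_. 0)"
  by (induction "is") (auto simp: pd_def fun_eq_iff)

lemma Opos_pos: "x \<in> Opos d \<Longrightarrow> j < d \<Longrightarrow> 0 < x j"
  by (auto simp: Opos_def PiE_iff)

lemma prod_pe_powr:
  assumes "1 \<le> d" "x \<in> Opos d"
  shows "(\<Prod>j<d. x j powr ((real (pe a j) + real (pe b j)) / 2)) = x 0 powr ((real a + real b) / 2)"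
proof -
  have "(\<Prod>j<d. x j powr ((real (pe a j) + real (pe b j)) / 2))
      = x 0 powr ((real (pe a 0) + real (pe b 0)) / 2) * (\<Prod>j\<in>{..<d} - {0}. x j powr ((real (pe a j) + real (pe b j)) / 2))"
    using assms by (subst prod.remove[of _ 0]) auto
  also have "(\<Prod>j\<in>{..<d} - {0}. x j powr ((real (pe a j) + real (pe b j)) / 2)) = 1"
  proof (intro prod.neutral ballI)
    fix j assume j: "j \<in> {..<d} - {0}"
    then have "0 < x j" using Opos_pos[OF assms(2)] by auto
    then show "x j powr ((real (pe a j) + real (pe b j)) / 2) = 1" using j by (simp add: pe_def)
  qed
  finally show ?thesis by (simp add: pe_def)
qed

lemma prod_pe_pow:
  assumes "1 \<le> d"
  shows "(\<Prod>j<d. x j ^ pe k j) = x 0 ^ k"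
proof -
  have "(\<Prod>j<d. x j ^ pe k j) = x 0 ^ pe k 0 * (\<Prod>j\<in>{..<d} - {0}. x j ^ pe k j)"
    using assms by (subst prod.remove[of _ 0]) auto
  also have "(\<Prod>j\<in>{..<d} - {0}. x j ^ pe k j) = 1"
    by (intro prod.neutral) (auto simp: pe_def)
  finally show ?thesis by (simp add: pe_def)
qed

lemma mlen_pe: assumes "1 \<le> d" shows "mlen d (pe a) = a"
proof -
  have "mlen d (pe a) = pe a 0 + (\<Sum>j\<in>{..<d} - {0}. pe a j)"
    unfolding mlen_def using assms by (subst sum.remove[of _ 0]) auto
  also have "(\<Sum>j\<in>{..<d} - {0}. pe a j) = 0" by (auto simp: pe_def)
  finally show ?thesis by (simp add: pe_def)
qed

lemma mpow_pe: assumes "1 \<le> d"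
  shows "mpow d \<alpha> (pe a) = (if a = 0 then 1 else real a powr ((\<alpha> / 2) * real a))"
proof -
  have "mpow d \<alpha> (pe a) = (if pe a 0 = 0 then 1 else real (pe a 0) powr ((\<alpha> / 2) * real (pe a 0))) *
      (\<Prod>j\<in>{..<d} - {0}. if pe a j = 0 then 1 else real (pe a j) powr ((\<alpha> / 2) * real (pe a j)))"
    unfolding mpow_def using assms by (subst prod.remove[of _ 0]) auto
  also have "(\<Prod>j\<in>{..<d} - {0}. if pe a j = 0 then 1 else real (pe a j) powr ((\<alpha> / 2) * real (pe a j))) = 1"
    by (intro prod.neutral) (auto simp: pe_def)
  finally show ?thesis by (simp add: pe_def)
qed

lemma Opos_borel: "Opos d \<in> sets borel"
proof -
  define A where "A = (\<Inter>j\<in>{..<d}. {x::nat\<Rightarrow>real. 0 < x j})"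
  define B where "B = (\<Inter>j\<in>{d..}. {x::nat\<Rightarrow>real. x j = undefined})"
  have "open A" unfolding A_def
    by (intro open_INT ballI open_Collect_less continuous_on_const) auto
  moreover have "closed B" unfolding B_def
    by (intro closed_INT ballI closed_Collect_eq continuous_on_const) auto
  moreover have "Opos d = A \<inter> B"
  proof (intro set_eqI iffI)
    fix x assume "x \<in> Opos d" then show "x \<in> A \<inter> B"
      by (auto simp: Opos_def A_def B_def PiE_iff extensional_def)
  next
    fix x assume x: "x \<in> A \<inter> B"
    have "x j = undefined" if "j \<notin> {..<d}" for j using x that by (auto simp: B_def)
    then show "x \<in> Opos d" using x by (auto simp: Opos_def A_def PiE_iff extensional_def)
  qed
  ultimately show ?thesis by auto
qed

lemma id_meas: "(\<lambda>x. x) \<in> borel_measurable (lebd d)"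
proof (rule measurable_coordinatewise_then_product)
  fix i
  show "(\<lambda>x. x i) \<in> borel_measurable (lebd d)"
  proof (cases "i < d")
    case True
    then show ?thesis unfolding lebd_def
      using measurable_component_singleton[of i "{..<d}" "\<lambda>_. lborel"] by simp
  next
    case False
    have "(\<lambda>x. undefined) \<in> borel_measurable (lebd d)" by simp
    then show ?thesis
      by (rule measurable_cong[THEN iffD1, rotated])
        (use False in \<open>auto simp: lebd_def space_PiM PiE_iff extensional_def\<close>)
  qed
qed

lemma meas_ind:
  fixes h :: "(nat \<Rightarrow> real) \<Rightarrow> real"
  assumes "continuous_on (Opos d) h"
  shows "(\<lambda>x. indicator (Opos d) x * ennreal (h x)) \<in> borel_measurable (lebd d)"
proof -
  have "(\<lambda>x. indicator (Opos d) x *\<^sub>R h x) \<in> borel_measurable borel"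
    by (rule borel_measurable_continuous_on_indicator[OF Opos_borel assms])
  then have "(\<lambda>x. ennreal (indicator (Opos d) x *\<^sub>R h x)) \<in> borel_measurable borel"
    by measurable
  from measurable_compose[OF id_meas this]
  show ?thesis by (simp add: ind_ennreal)
qed




definition GG :: "((nat \<Rightarrow> real) \<Rightarrow> complex) \<Rightarrow> nat \<Rightarrow> (nat \<Rightarrow> real) \<Rightarrow> complex" where
  "GG f a = pdl (replicate a 0) f"

definition QQ :: "nat \<Rightarrow> ((nat \<Rightarrow> real) \<Rightarrow> complex) \<Rightarrow> nat \<Rightarrow> nat \<Rightarrow> ennreal" where
  "QQ d f a b = (\<integral>\<^sup>+ x. indicator (Opos d) x * ennreal (x 0 ^ (a + b) * (cmod (GG f a x))\<^sup>2) \<partial>lebd d)"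

lemma GG_Suc: "GG f (Suc a) = pd 0 (GG f a)"
  by (simp add: GG_def)

interpretation PSF: product_sigma_finite "\<lambda>_::nat. lborel :: real measure"
  by (simp add: product_sigma_finite_def sigma_finite_lborel)

context
  fixes d :: nat and f :: "(nat \<Rightarrow> real) \<Rightarrow> complex"
  assumes d1: "1 \<le> d" and sp: "schwartz_plus d f"
begin

lemma setrep: "set (replicate a (0::nat)) \<subseteq> {..<d}"
  using d1 by auto

lemma contG: "continuous_on (Opos d) (GG f a)"
  using sp setrep[of a] unfolding schwartz_plus_def GG_def by blast

lemma difG: "x \<in> Opos d \<Longrightarrow> (\<lambda>t. GG f a (x(0 := t))) differentiable (at (x 0))"
  using sp setrep[of a] d1 unfolding schwartz_plus_def GG_def by auto

lemma bndG: "\<exists>C. \<forall>x\<in>Opos d. x 0 ^ k * cmod (GG f a x) \<le> C"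
proof -
  obtain C where C: "\<forall>x\<in>Opos d. (\<Prod>j<d. x j ^ pe k j) * cmod (mpd d (pe a) f x) \<le> C"
    using sp unfolding schwartz_plus_def by blast
  then have "\<forall>x\<in>Opos d. x 0 ^ k * cmod (GG f a x) \<le> C"
    by (simp add: prod_pe_pow[OF d1] mpd_pe[OF d1] GG_def)
  then show ?thesis by blast
qed

lemma measQ: "(\<lambda>x. indicator (Opos d) x * ennreal (x 0 ^ m * (cmod (GG f a x))\<^sup>2)) \<in> borel_measurable (lebd d)"
proof (rule meas_ind)
  have c0: "continuous_on (Opos d) (\<lambda>x::nat\<Rightarrow>real. x 0)"
    by (rule continuous_on_subset[OF continuous_on_product_coordinates]) simp
  show "continuous_on (Opos d) (\<lambda>x. x 0 ^ m * (cmod (GG f a x))\<^sup>2)"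
    by (intro continuous_intros c0 contG)
qed

definition Iset where "Iset = {1..<d}"

lemma lebd_ins: "lebd d = PiM (insert 0 Iset) (\<lambda>_. lborel)"
proof -
  have "{..<d} = insert 0 {1..<d}" using d1 by auto
  then show ?thesis unfolding lebd_def Iset_def by simp
qed

lemma fub:
  assumes "F \<in> borel_measurable (lebd d)"
  shows "integral\<^sup>N (lebd d) F = (\<integral>\<^sup>+ y. (\<integral>\<^sup>+ t. F (y(0 := t)) \<partial>lborel) \<partial>PiM Iset (\<lambda>_. lborel))"
  using assms unfolding lebd_ins
  by (intro PSF.product_nn_integral_insert) (auto simp: Iset_def)

lemma slice_Opos:
  assumes "y \<in> space (PiM Iset (\<lambda>_. lborel :: real measure))"
  shows "(y(0 := t) \<in> Opos d) = (0 < t \<and> (\<forall>j\<in>Iset. 0 < y j))"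
proof -
  have ext: "y j = undefined" if "j \<notin> Iset" for j
    using assms that by (auto simp: space_PiM PiE_iff extensional_def)
  show ?thesis
  proof
    assume H: "y(0 := t) \<in> Opos d"
    have "0 < d" using d1 by simp
    then have "0 < (y(0 := t)) 0" by (rule Opos_pos[OF H])
    moreover have "0 < y j" if "j \<in> Iset" for j
    proof -
      have "j < d" "j \<noteq> 0" using that by (auto simp: Iset_def)
      then show ?thesis using Opos_pos[OF H, of j] by simp
    qed
    ultimately show "0 < t \<and> (\<forall>j\<in>Iset. 0 < y j)" by simp
  next
    assume H: "0 < t \<and> (\<forall>j\<in>Iset. 0 < y j)"
    have "(y(0 := t)) j \<in> {0<..}" if "j \<in> {..<d}" for j
    proof (cases "j = 0")
      case False
      then have "j \<in> Iset" using that by (auto simp: Iset_def)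
      then show ?thesis using H False by simp
    qed (use H in simp)
    moreover have "(y(0 := t)) j = undefined" if "j \<notin> {..<d}" for j
    proof -
      have "j \<noteq> 0" "j \<notin> Iset" using that d1 by (auto simp: Iset_def)
      then show ?thesis using ext by simp
    qed
    ultimately show "y(0 := t) \<in> Opos d" unfolding Opos_def by (simp add: PiE_iff extensional_def)
  qed
qed

lemma step: "QQ d f a b \<le> ennreal (1 / real (a + b + 1)) * (QQ d f (Suc a) b + QQ d f a (Suc b))"
proof -
  define m where "m = a + b"
  define F where "F x = indicator (Opos d) x * ennreal (x 0 ^ m * (cmod (GG f a x))\<^sup>2)" for x
  define H where "H x = indicator (Opos d) x * ennreal ((x 0 ^ (m+1) * (cmod (GG f (Suc a) x))\<^sup>2 + x 0 ^ (m+1) * (cmod (GG f a x))\<^sup>2) / (m+1))" for x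
  define F1 where "F1 x = indicator (Opos d) x * ennreal (x 0 ^ (m+1) * (cmod (GG f (Suc a) x))\<^sup>2)" for x
  define F2 where "F2 x = indicator (Opos d) x * ennreal (x 0 ^ (m+1) * (cmod (GG f a x))\<^sup>2)" for x
  have mF: "F \<in> borel_measurable (lebd d)" unfolding F_def by (rule measQ)
  have mF1[measurable]: "F1 \<in> borel_measurable (lebd d)" unfolding F1_def by (rule measQ)
  have mF2[measurable]: "F2 \<in> borel_measurable (lebd d)" unfolding F2_def by (rule measQ)
  have Heq: "H x = ennreal (1 / real (m+1)) * (F1 x + F2 x)" for x
  proof (cases "x \<in> Opos d")
    case True
    then have x0: "0 < x 0" using Opos_pos d1 by simp
    define u where "u = x 0 ^ (m+1) * (cmod (GG f (Suc a) x))\<^sup>2"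
    define v where "v = x 0 ^ (m+1) * (cmod (GG f a x))\<^sup>2"
    have uv: "0 \<le> u" "0 \<le> v" unfolding u_def v_def using x0 by auto
    have eq: "(u + v) / real (m+1) = 1 / real (m+1) * (u + v)" by simp
    have "ennreal ((u + v) / real (m+1)) = ennreal (1 / real (m+1)) * ennreal (u + v)"
      unfolding eq by (rule ennreal_mult) (use uv in auto)
    also have "ennreal (u + v) = ennreal u + ennreal v" by (rule ennreal_plus[OF uv])
    finally show ?thesis using True unfolding H_def F1_def F2_def u_def v_def by simp
  next
    case False
    then show ?thesis unfolding H_def F1_def F2_def by simp
  qed
  have mH: "H \<in> borel_measurable (lebd d)" unfolding Heq by measurable
  have intH: "integral\<^sup>N (lebd d) H = ennreal (1 / real (m+1)) * (QQ d f (Suc a) b + QQ d f a (Suc b))"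
  proof -
    have "integral\<^sup>N (lebd d) H = ennreal (1 / real (m+1)) * integral\<^sup>N (lebd d) (\<lambda>x. F1 x + F2 x)"
      unfolding Heq by (rule nn_integral_cmult) measurable
    also have "integral\<^sup>N (lebd d) (\<lambda>x. F1 x + F2 x) = integral\<^sup>N (lebd d) F1 + integral\<^sup>N (lebd d) F2"
      by (rule nn_integral_add) measurable
    also have "integral\<^sup>N (lebd d) F1 = QQ d f (Suc a) b" unfolding F1_def QQ_def m_def by simp
    also have "integral\<^sup>N (lebd d) F2 = QQ d f a (Suc b)" unfolding F2_def QQ_def m_def by simp
    finally show ?thesis .
  qed
  have "QQ d f a b = integral\<^sup>N (lebd d) F" unfolding QQ_def F_def m_def ..
  also have "\<dots> = (\<integral>\<^sup>+ y. (\<integral>\<^sup>+ t. F (y(0 := t)) \<partial>lborel) \<partial>PiM Iset (\<lambda>_. lborel))"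
    by (rule fub[OF mF])
  also have "\<dots> \<le> (\<integral>\<^sup>+ y. (\<integral>\<^sup>+ t. H (y(0 := t)) \<partial>lborel) \<partial>PiM Iset (\<lambda>_. lborel))"
  proof (rule nn_integral_mono)
    fix y assume y: "y \<in> space (PiM Iset (\<lambda>_. lborel :: real measure))"
    show "(\<integral>\<^sup>+ t. F (y(0 := t)) \<partial>lborel) \<le> (\<integral>\<^sup>+ t. H (y(0 := t)) \<partial>lborel)"
    proof (cases "\<forall>j\<in>Iset. 0 < y j")
      case False
      then have "F (y(0 := t)) = 0" for t using slice_Opos[OF y] unfolding F_def by simp
      then show ?thesis by simp
    next
      case True
      define \<phi> where "\<phi> t = GG f a (y(0 := t))" for t
      define \<phi>' where "\<phi>' t = GG f (Suc a) (y(0 := t))" for t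
      have inO: "y(0 := t) \<in> Opos d" if "0 < t" for t using slice_Opos[OF y] True that by simp
      have ind: "(indicator (Opos d) (y(0 := t)) :: ennreal) = indicator {0<..} t" for t
        using slice_Opos[OF y] True by (simp add: indicator_def)
      have dif: "(\<lambda>s. GG f c (y(0 := s))) differentiable (at t)" if "0 < t" for c t
        using difG[OF inO[OF that], of c] by simp
      have der: "(\<phi> has_vector_derivative \<phi>' t) (at t)" if "0 < t" for t
      proof -
        have "\<phi>' t = vector_derivative (\<lambda>s. GG f a (y(0 := s))) (at t)"
          unfolding \<phi>'_def GG_Suc pd_def by simp
        then show ?thesis unfolding \<phi>_def using dif[OF that, of a] vector_derivative_works by auto
      qed
      have cont': "continuous_on {0<..} \<phi>'"
        unfolding \<phi>'_def
        by (rule continuous_at_imp_continuous_on) (auto intro: differentiable_imp_continuous_within dif)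
      obtain C0 where C0: "\<forall>x\<in>Opos d. x 0 ^ 0 * cmod (GG f a x) \<le> C0" using bndG by blast
      obtain C1 where C1: "\<forall>x\<in>Opos d. x 0 ^ (m+2) * cmod (GG f a x) \<le> C1" using bndG by blast
      have b0: "cmod (\<phi> t) \<le> C0" if "0 < t" for t using C0 inO[OF that] unfolding \<phi>_def by auto
      have b1: "t ^ (m+2) * cmod (\<phi> t) \<le> C1" if "0 < t" for t using C1 inO[OF that] unfolding \<phi>_def by auto
      have "(\<integral>\<^sup>+ t. F (y(0 := t)) \<partial>lborel) = (\<integral>\<^sup>+t. indicator {0<..} t * ennreal (t ^ m * (cmod (\<phi> t))\<^sup>2) \<partial>lborel)"
        unfolding F_def ind \<phi>_def by simp
      also have "\<dots> \<le> (\<integral>\<^sup>+t. indicator {0<..} t * ennreal ((t ^ (m+1) * (cmod (\<phi>' t))\<^sup>2 + t ^ (m+1) * (cmod (\<phi> t))\<^sup>2) / (m+1)) \<partial>lborel)"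
        by (rule ibp1d[OF der cont' b0 b1])
      also have "\<dots> = (\<integral>\<^sup>+ t. H (y(0 := t)) \<partial>lborel)"
        unfolding H_def ind \<phi>_def \<phi>'_def by simp
      finally show ?thesis .
    qed
  qed
  also have "\<dots> = integral\<^sup>N (lebd d) H" by (rule fub[OF mH, symmetric])
  finally show ?thesis using intH unfolding m_def by simp
qed

end



lemma sq_powr: "((z::real) powr u)\<^sup>2 = z powr (2 * u)"
  by (simp add: power2_eq_square powr_add[symmetric])

lemma pow_fact_exp: "(real n) ^ n / fact n \<le> exp (real n)"
proof -
  have s: "(\<lambda>k. real n ^ k /\<^sub>R fact k) sums exp (real n)" by (rule exp_converges)
  have "real n ^ n / fact n \<le> (\<Sum>k<Suc n. real n ^ k /\<^sub>R fact k)"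
    using member_le_sum[of n "{..<Suc n}" "\<lambda>k. real n ^ k /\<^sub>R fact k"] by (simp add: divide_inverse_commute)
  also have "\<dots> \<le> exp (real n)"
    using sum_le_suminf[OF sums_summable[OF s], of "{..<Suc n}"] sums_unique[OF s] by simp
  finally show ?thesis .
qed

lemma down_ind:
  fixes Q :: "nat \<Rightarrow> nat \<Rightarrow> ennreal"
  assumes stp: "\<And>a b. Q a b \<le> ennreal (1 / real (a + b + 1)) * (Q (Suc a) b + Q a (Suc b))"
    and top: "\<And>a b. a + b = n \<Longrightarrow> Q a b \<le> ennreal B" and B: "0 \<le> B"
  shows "Q 0 0 \<le> ennreal (B * 2 ^ n / fact n)"
proof -
  have "\<forall>a b. a + b = n - i \<longrightarrow> Q a b \<le> ennreal (B * 2 ^ i * fact (n - i) / fact n)" if "i \<le> n" for i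
    using that
  proof (induction i)
    case 0
    then show ?case using top by simp
  next
    case (Suc i)
    show ?case
    proof (intro allI impI)
      fix a b assume ab: "a + b = n - Suc i"
      define j where "j = n - Suc i"
      have nj: "n - i = Suc j" using Suc.prems unfolding j_def by simp
      define Y where "Y = B * 2 ^ i * fact j / fact n"
      define X where "X = real (Suc j) * Y"
      have X0: "0 \<le> X" unfolding X_def Y_def using B by simp
      have XX: "B * 2 ^ i * fact (n - i) / fact n = X"
        unfolding X_def Y_def nj fact_Suc by simp
      have h1: "Q (Suc a) b \<le> ennreal X" using Suc ab nj XX unfolding j_def by simp
      have h2: "Q a (Suc b) \<le> ennreal X" using Suc ab nj XX unfolding j_def by simp
      have "Q a b \<le> ennreal (1 / real (Suc j)) * (Q (Suc a) b + Q a (Suc b))"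
        using stp[of a b] ab unfolding j_def by simp
      also have "\<dots> \<le> ennreal (1 / real (Suc j)) * (ennreal X + ennreal X)"
        by (intro mult_left_mono add_mono h1 h2) simp
      also have "ennreal X + ennreal X = ennreal (X + X)"
        by (rule ennreal_plus[symmetric]) (use X0 in auto)
      also have "ennreal (1 / real (Suc j)) * ennreal (X + X) = ennreal (1 / real (Suc j) * (X + X))"
        by (rule ennreal_mult[symmetric]) (use X0 in auto)
      also have "1 / real (Suc j) * (X + X) = 2 * Y"
        unfolding X_def by (simp add: field_simps)
      also have "2 * Y = B * 2 ^ Suc i * fact (n - Suc i) / fact n"
        unfolding Y_def j_def by simp
      finally show "Q a b \<le> ennreal (B * 2 ^ Suc i * fact (n - Suc i) / fact n)" .
    qed
  qed
  from this[of n] show ?thesis by simp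
qed

lemma wl_QQ:
  assumes d1: "1 \<le> d"
  shows "wL2sq d (pe a) (pe b) f = QQ d f a b"
  unfolding wL2sq_def QQ_def
proof (rule nn_integral_cong)
  fix x
  show "indicator (Opos d) x * ennreal (((\<Prod>j<d. x j powr ((real (pe a j) + real (pe b j)) / 2)) * cmod (mpd d (pe a) f x))\<^sup>2)
      = indicator (Opos d) x * ennreal (x 0 ^ (a + b) * (cmod (GG f a x))\<^sup>2)"
  proof (cases "x \<in> Opos d")
    case True
    have x0: "0 < x 0" using Opos_pos[OF True] d1 by simp
    have "(x 0 powr ((real a + real b) / 2))\<^sup>2 = x 0 powr (real (a + b))"
    proof -
      have e: "2 * ((real a + real b) / 2) = real (a + b)" by simp
      show ?thesis unfolding sq_powr e ..
    qed
    also have "\<dots> = x 0 ^ (a + b)" using x0 by (rule powr_realpow)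
    finally have "(x 0 powr ((real a + real b) / 2))\<^sup>2 = x 0 ^ (a + b)" .
    then show ?thesis
      unfolding prod_pe_powr[OF d1 True] mpd_pe[OF d1] GG_def by (simp add: power_mult_distrib)
  qed simp
qed

lemma mpow_bound:
  assumes "0 < \<alpha>" "\<alpha> \<le> 1" "b \<le> n" "1 \<le> n"
  shows "0 \<le> (if b = 0 then 1 else real b powr ((\<alpha> / 2) * real b))"
    and "(if b = 0 then 1 else real b powr ((\<alpha> / 2) * real b))\<^sup>2 \<le> real n ^ b"
proof -
  show "0 \<le> (if b = 0 then 1 else real b powr ((\<alpha> / 2) * real b))" by simp
  show "(if b = 0 then 1 else real b powr ((\<alpha> / 2) * real b))\<^sup>2 \<le> real n ^ b"
  proof (cases "b = 0")
    case False
    have b1: "1 \<le> real b" using False by simp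
    have "real b powr ((\<alpha> / 2) * real b) \<le> real b powr ((1 / 2) * real b)"
      using assms b1 by (intro powr_mono mult_right_mono) auto
    also have "\<dots> \<le> real n powr ((1 / 2) * real b)"
      using assms by (intro powr_mono2) auto
    finally have le: "real b powr ((\<alpha> / 2) * real b) \<le> real n powr ((1 / 2) * real b)" .
    have "(real b powr ((\<alpha> / 2) * real b))\<^sup>2 \<le> (real n powr ((1 / 2) * real b))\<^sup>2"
      using le by (intro power_mono) auto
    also have "\<dots> = real n powr (real b)"
      unfolding sq_powr by simp
    also have "\<dots> = real n ^ b" using assms by (intro powr_realpow) auto
    finally show ?thesis using False by simp
  qed simp
qed

lemma level_bound:
  assumes "0 < \<alpha>" "\<alpha> \<le> 1" "1 \<le> n" "a + b = n" "0 \<le> A"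
  shows "(C * A ^ (a + b) * (if b = 0 then 1 else real b powr ((\<alpha> / 2) * real b)) * (if a = 0 then 1 else real a powr ((\<alpha> / 2) * real a)))\<^sup>2
     \<le> C\<^sup>2 * A ^ (2 * n) * real n ^ n"
proof -
  define Mb where "Mb = (if b = 0 then 1 else real b powr ((\<alpha> / 2) * real b))"
  define Ma where "Ma = (if a = 0 then 1 else real a powr ((\<alpha> / 2) * real a))"
  have bn: "b \<le> n" "a \<le> n" using assms by auto
  note mb = mpow_bound[OF assms(1,2) bn(1) assms(3), folded Mb_def]
  note ma = mpow_bound[OF assms(1,2) bn(2) assms(3), folded Ma_def]
  have "(C * A ^ (a + b) * Mb * Ma)\<^sup>2 = C\<^sup>2 * A ^ (2 * n) * (Mb\<^sup>2 * Ma\<^sup>2)"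
    using assms by (simp add: power_mult_distrib power_mult[symmetric] mult.commute)
  also have "\<dots> \<le> C\<^sup>2 * A ^ (2 * n) * (real n ^ b * real n ^ a)"
    using mb ma assms by (intro mult_left_mono mult_mono) auto
  also have "real n ^ b * real n ^ a = real n ^ n" using assms(4) by (metis add.commute power_add)
  finally show ?thesis unfolding Mb_def Ma_def .
qed





lemma zero_from_int:
  assumes d1: "1 \<le> d" and cont: "continuous_on (Opos d) f"
    and int0: "(\<integral>\<^sup>+x. indicator (Opos d) x * ennreal ((cmod (f x))\<^sup>2) \<partial>lebd d) = 0"
    and xs: "xs \<in> Opos d"
  shows "f xs = 0"
proof (rule ccontr)
  assume nz: "f xs \<noteq> 0"
  define r where "r = cmod (f xs) / 2"
  have r0: "0 < r" using nz by (simp add: r_def)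
  obtain U where U: "open U" "U \<inter> Opos d = f -` ball (f xs) r \<inter> Opos d"
    using cont unfolding continuous_on_open_invariant by (meson open_ball)
  have xsU: "xs \<in> U" using U(2) xs r0 by auto
  have "openin (product_topology (\<lambda>_. euclidean) UNIV) U"
    using U(1) by (simp add: euclidean_product_topology)
  then obtain V where V: "\<forall>i\<in>UNIV. openin euclidean (V i)" "xs \<in> PiE UNIV V" "PiE UNIV V \<subseteq> U"
    using xsU unfolding openin_product_topology_alt by blast
  have Vo: "open (V i)" for i using V(1) by simp
  have xsV: "xs i \<in> V i" for i using V(2) by (auto simp: PiE_iff)
  have "\<exists>e>0. ball (xs j) e \<subseteq> V j" for j using Vo[of j] xsV[of j] open_contains_ball by blast
  then obtain e where e: "\<And>j. 0 < e j" "\<And>j. ball (xs j) (e j) \<subseteq> V j" by metis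
  define \<delta> where "\<delta> = Min ((\<lambda>j. min (e j) (xs j)) ` {..<d})"
  have "0 \<in> {..<d}" using d1 by simp
  then have ne: "{..<d} \<noteq> {}" by blast
  have \<delta>0: "0 < \<delta>" unfolding \<delta>_def using ne e(1) Opos_pos[OF xs] by (subst Min_gr_iff) auto
  have \<delta>le: "\<delta> \<le> e j" "\<delta> \<le> xs j" if "j < d" for j
  proof -
    have "\<delta> \<le> min (e j) (xs j)" unfolding \<delta>_def using that by (intro Min_le) auto
    then show "\<delta> \<le> e j" "\<delta> \<le> xs j" by auto
  qed
  define Box where "Box = PiE {..<d} (\<lambda>j. {xs j - \<delta> <..< xs j + \<delta>})"
  have Box_sub: "z \<in> Opos d \<and> r \<le> cmod (f z)" if z: "z \<in> Box" for z
  proof -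
    have zj: "xs j - \<delta> < z j \<and> z j < xs j + \<delta>" if "j < d" for j using z that by (auto simp: Box_def PiE_iff)
    have zu: "z j = undefined" if "\<not> j < d" for j using z that by (auto simp: Box_def PiE_iff extensional_def)
    have xu: "xs j = undefined" if "\<not> j < d" for j using xs that by (auto simp: Opos_def PiE_iff extensional_def)
    have zO: "z \<in> Opos d"
    proof -
      have "0 < z j" if "j < d" for j using zj[OF that] \<delta>le[OF that] by linarith
      then show ?thesis using zu unfolding Opos_def by (auto simp: PiE_iff extensional_def)
    qed
    have "z \<in> PiE UNIV V"
    proof -
      have "z j \<in> V j" for j
      proof (cases "j < d")
        case True
        have "dist (xs j) (z j) < e j" using zj[OF True] \<delta>le[OF True] by (auto simp: dist_real_def abs_if)
        then show ?thesis using e(2)[of j] by auto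
      next
        case False
        then show ?thesis using zu xu xsV by metis
      qed
      then show ?thesis by (auto simp: PiE_iff)
    qed
    then have "z \<in> U" using V(3) by auto
    then have "z \<in> f -` ball (f xs) r" using U(2) zO by auto
    then have "dist (f xs) (f z) < r" by simp
    then have "r \<le> cmod (f z)" unfolding r_def dist_norm
      using norm_triangle_ineq2[of "f xs" "f z"] by linarith
    then show ?thesis using zO by simp
  qed
  have Box_sets: "Box \<in> sets (lebd d)" unfolding lebd_def Box_def
    by (rule sets_PiM_I_finite) auto
  have mBox: "emeasure (lebd d) Box = ennreal ((2 * \<delta>) ^ d)"
  proof -
    have "emeasure (lebd d) Box = (\<Prod>j<d. emeasure lborel {xs j - \<delta> <..< xs j + \<delta>})"
      unfolding lebd_def Box_def by (rule PSF.emeasure_PiM) auto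
    also have "\<dots> = (\<Prod>j<d. ennreal (2 * \<delta>))" using \<delta>0 by (intro prod.cong) auto
    also have "\<dots> = ennreal (2 * \<delta>) ^ d" by simp
    also have "\<dots> = ennreal ((2 * \<delta>) ^ d)" by (rule ennreal_power) (use \<delta>0 in simp)
    finally show ?thesis .
  qed
  have "(\<integral>\<^sup>+x. ennreal (r\<^sup>2) * indicator Box x \<partial>lebd d) \<le> (\<integral>\<^sup>+x. indicator (Opos d) x * ennreal ((cmod (f x))\<^sup>2) \<partial>lebd d)"
  proof (rule nn_integral_mono)
    fix x
    show "ennreal (r\<^sup>2) * indicator Box x \<le> indicator (Opos d) x * ennreal ((cmod (f x))\<^sup>2)"
    proof (cases "x \<in> Box")
      case True
      then have "x \<in> Opos d" "r \<le> cmod (f x)" using Box_sub by auto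
      then show ?thesis using True r0 by (auto intro!: ennreal_leI power_mono)
    qed simp
  qed
  then have "ennreal (r\<^sup>2) * ennreal ((2 * \<delta>) ^ d) \<le> 0"
    using int0 nn_integral_cmult_indicator[OF Box_sets] mBox by simp
  moreover have "0 < r\<^sup>2 * (2 * \<delta>) ^ d" using r0 \<delta>0 by simp
  ultimately show False using r0 \<delta>0 by (simp add: ennreal_mult[symmetric])
qed




lemma zero_GS: "(\<lambda>_. 0) \<in> GS d \<alpha>"
proof -
  have mz: "mpd d \<gamma> (\<lambda>_. 0) = (\<lambda>_. 0)" for \<gamma> unfolding mpd_def pdl_zero ..
  have sp: "schwartz_plus d (\<lambda>_. 0)"
    unfolding schwartz_plus_def pdl_zero mz
    by (auto intro!: exI[of _ "\<lambda>_. 0"] exI[of _ 0])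
  have wz: "wL2sq d p k (\<lambda>_. 0) = 0" for p k
    unfolding wL2sq_def mz by simp
  show ?thesis unfolding GS_def GS_A_def using sp wz by auto
qed

theorem theorem2p8:
  fixes d :: nat and \<alpha> :: real
  assumes "d \<ge> 1" and "0 < \<alpha>" and "\<alpha> \<le> 1"
  shows "(\<lambda>_. 0) \<in> GS d \<alpha> \<and> (\<forall>f\<in>GS d \<alpha>. \<forall>x\<in>Opos d. f x = 0)"
proof
  show "(\<lambda>_. 0) \<in> GS d \<alpha>" by (rule zero_GS)
  have d1: "1 \<le> d" using assms(1) by simp
  show "\<forall>f\<in>GS d \<alpha>. \<forall>x\<in>Opos d. f x = 0"
  proof (intro ballI)
    fix f x assume fG: "f \<in> GS d \<alpha>" and x: "x \<in> Opos d"
    define A :: real where "A = exp (-1) / 2"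
    have A0: "0 < A" unfolding A_def by simp
    from fG A0 have "f \<in> GS_A d \<alpha> A" unfolding GS_def by auto
    then have sp: "schwartz_plus d f"
      and "\<exists>C::real. \<forall>p k. wL2sq d p k f \<le> ennreal ((C * A ^ (mlen d p + mlen d k) * mpow d \<alpha> k * mpow d \<alpha> p)\<^sup>2)"
      unfolding GS_A_def by auto
    then obtain C :: real where hC: "\<And>p k. wL2sq d p k f \<le> ennreal ((C * A ^ (mlen d p + mlen d k) * mpow d \<alpha> k * mpow d \<alpha> p)\<^sup>2)"
      by blast
    have lev: "QQ d f a b \<le> ennreal (C\<^sup>2 * A ^ (2 * n) * real n ^ n)" if ab: "a + b = n" and n1: "1 \<le> n" for a b n
    proof -
      have "QQ d f a b = wL2sq d (pe a) (pe b) f" by (rule wl_QQ[OF d1, symmetric])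
      also have "\<dots> \<le> ennreal ((C * A ^ (mlen d (pe a) + mlen d (pe b)) * mpow d \<alpha> (pe b) * mpow d \<alpha> (pe a))\<^sup>2)"
        by (rule hC)
      also have "\<dots> \<le> ennreal (C\<^sup>2 * A ^ (2 * n) * real n ^ n)"
        unfolding mlen_pe[OF d1] mpow_pe[OF d1]
        by (rule ennreal_leI, rule level_bound) (use assms A0 ab n1 in auto)
      finally show ?thesis .
    qed
    have qn: "QQ d f 0 0 \<le> ennreal (C\<^sup>2 * (1 / 2) ^ n)" if n1: "1 \<le> n" for n
    proof -
      define B where "B = C\<^sup>2 * A ^ (2 * n) * real n ^ n"
      have B0: "0 \<le> B" unfolding B_def using A0 by simp
      have "QQ d f 0 0 \<le> ennreal (B * 2 ^ n / fact n)"
        by (rule down_ind[where Q = "QQ d f"], rule step[OF d1 sp], rule lev[OF _ n1, folded B_def], assumption, rule B0)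
      also have "B * 2 ^ n / fact n \<le> C\<^sup>2 * (1 / 2) ^ n"
      proof -
        have "B * 2 ^ n / fact n = C\<^sup>2 * (2 * A\<^sup>2) ^ n * (real n ^ n / fact n)"
        proof -
          have e: "A ^ (2 * n) = (A\<^sup>2) ^ n" by (simp add: power_mult)
          show ?thesis unfolding B_def e by (simp add: power_mult_distrib field_simps)
        qed
        also have "\<dots> \<le> C\<^sup>2 * (2 * A\<^sup>2) ^ n * exp (real n)"
          by (intro mult_left_mono pow_fact_exp) auto
        also have "exp (real n) = exp 1 ^ n" by (simp add: exp_of_nat_mult[symmetric])
        also have "C\<^sup>2 * (2 * A\<^sup>2) ^ n * exp 1 ^ n = C\<^sup>2 * (2 * A\<^sup>2 * exp 1) ^ n"
          by (simp add: power_mult_distrib)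
        also have "2 * A\<^sup>2 * exp 1 = exp (-1) / 2"
        proof -
          have h: "exp (-1) * exp (1::real) = 1" using exp_add[of "-1" 1] by simp
          have "exp (-1) * exp (-1) * exp 1 = exp (-1::real)" by (metis h mult.assoc mult.right_neutral)
          then show ?thesis unfolding A_def by (simp add: power2_eq_square field_simps)
        qed
        also have "C\<^sup>2 * (exp (-1) / 2) ^ n \<le> C\<^sup>2 * (1 / 2) ^ n"
          by (intro mult_left_mono power_mono) auto
        finally show ?thesis .
      qed
      then have "ennreal (B * 2 ^ n / fact n) \<le> ennreal (C\<^sup>2 * (1 / 2) ^ n)" by (rule ennreal_leI)
      finally show ?thesis .
    qed
    have lim: "(\<lambda>n. ennreal (C\<^sup>2 * (1 / 2) ^ n)) \<longlonglongrightarrow> ennreal (C\<^sup>2 * 0)"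
      by (intro tendsto_ennrealI tendsto_mult tendsto_const LIMSEQ_power_zero) simp
    have "QQ d f 0 0 \<le> ennreal (C\<^sup>2 * 0)"
      by (rule LIMSEQ_le_const[OF lim]) (use qn in auto)
    then have Q0: "QQ d f 0 0 = 0" by simp
    have int0: "(\<integral>\<^sup>+x. indicator (Opos d) x * ennreal ((cmod (f x))\<^sup>2) \<partial>lebd d) = 0"
      using Q0 unfolding QQ_def GG_def by simp
    have cont: "continuous_on (Opos d) f" using contG[OF d1 sp, of 0] unfolding GG_def by simp
    show "f x = 0" by (rule zero_from_int[OF d1 cont int0 x])
  qed
qed


end
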